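(* Let $d\ge 2$, let $\mu_n\in\mathbb{R}^d$, and let $\Sigma_n\in\mathbb{R}^{d\times d}$ be symmetric positive definite with eigendecomposition $\Sigma_n=U_nD_nU_n^T$ ($U_n$ orthogonal, $D_n$ diagonal with positive entries). Let $P_n=N(\mu_n,\Sigma_n)$ be the Gaussian distribution on $\mathbb{R}^d$ with mean $\mu_n$ and covariance $\Sigma_n$. Let $w_n,w_n'\in\mathbb{R}^d$ (a sampled parameter vector and its updated value), with $w_n'\neq\mu_n$. For an invertible matrix $A\in\mathbb{R}^{d\times d}$ and $b\in\mathbb{R}^d$, let $P_{n+1}^{A,b}=N(A\mu_n+b,\,A\Sigma_nA^T)$ denote the push-forward of $P_n$ under the affine map $w\mapsto Aw+b$. Consider the problem $$\min_{A,b}\ D_{\mathrm{KL}}\big[P_{n+1}^{A,b}\,\|\,P_n\big]=\min_{A,b}\int P_{n+1}^{A,b}(w)\log\frac{P_{n+1}^{A,b}(w)}{P_n(w)}\,dw\quad\text{subject to}\quad w_n'=Aw_n+b.$$ Let $\hat\mu,\hat\nu\in\mathbb{R}^d$ be orthonormal vectors and $u,v_\parallel,v_\perp\in\mathbb{R}$ be such that $$u\hat\mu=\tfrac{1}{\sqrt{D_n}}U_n^T(w_n-\mu_n),\qquad v_\parallel\hat\mu+v_\perp\hat\nu=\tfrac{1}{\sqrt{D_n}}U_n^T(w_n'-\mu_n).$$ Then the solution $A^\ast$ of the problem is $$A^\ast=I_{d\times d}+U_n\sqrt{D_n}\left\{\bigl[\hat\mu\ \ \hat\nu\bigr]\left(A_{2\times2}-I_{2\times2}\right)\begin{bmatrix}\hat\mu^T\\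 \hat\nu^T\end{bmatrix}\right\}\frac{1}{\sqrt{D_n}}U_n^T,$$ where, writing $V=v_\parallel^2+v_\perp^2$ and $c=\dfrac{u\sqrt{V}+\delta_1\sqrt{4+u^2(4+V)}}{2(1+u^2)}$, $$A_{2\times2}=\frac{1}{\sqrt{V}}\begin{bmatrix}c\,v_\parallel & -\delta_2 v_\perp\\ c\,v_\perp & \delta_2 v_\parallel\end{bmatrix}$$ for some $\delta_1,\delta_2\in\{-1,+1\}$. The hyperparameters of the corresponding posterior $P_{n+1}=N(\mu_{n+1},\Sigma_{n+1})$ are $$\Sigma_{n+1}=A^\ast\Sigma_nA^{\ast T},\qquad \mu_{n+1}=A^\ast(\mu_n-w_n)+w_n'.$$
   Context: $\sqrt{D_n}$ and $\frac{1}{\sqrt{D_n}}$ denote the diagonal matrices whose entries are the square roots (resp. reciprocal square roots) of the diagonal entries of $D_n$. $[\hat\mu\ \hat\nu]$ is the $d\times 2$ matrix with columns $\hat\mu,\hat\nu$. $D_{\mathrm{KL}}$ is the Kullback–Leibler divergence. *)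

theory Defs
  imports "HOL-Analysis.Analysis"
begin

text \<open>Density of the multivariate Gaussian N(mu, Sigma) on real^'n (Sigma symmetric positive definite).\<close>
definition gauss_pdf :: "real^'n \<Rightarrow> real^'n^'n \<Rightarrow> real^'n \<Rightarrow> real" where
  "gauss_pdf mu S w =
     exp (- (1/2) * ((w - mu) \<bullet> (matrix_inv S *v (w - mu))))
       / sqrt ((2 * pi) ^ CARD('n) * det S)"

text \<open>KL divergence between densities p and q w.r.t. Lebesgue measure, as in the paper:
  integral of p(w) log(p(w)/q(w)) dw.\<close>
definition KL_dens :: "('a::euclidean_space \<Rightarrow> real) \<Rightarrow> ('a \<Rightarrow> real) \<Rightarrow> real" where
  "KL_dens p q = (\<integral>w. p w * ln (p w / q w) \<partial>lborel)"

text \<open>KL[ P^{A,b}_{n+1} || P_n ] where P_n = N(mu,S), P^{A,b}_{n+1} = N(A mu + b, A S A^T).\<close>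
definition KL_affine :: "real^'n \<Rightarrow> real^'n^'n \<Rightarrow> real^'n^'n \<Rightarrow> real^'n \<Rightarrow> real" where
  "KL_affine mu S A b = KL_dens (gauss_pdf (A *v mu + b) (A ** S ** transpose A)) (gauss_pdf mu S)"

definition diag_mat :: "real^'n \<Rightarrow> real^'n^'n" where
  "diag_mat d = (\<chi> i j. if i = j then d $ i else 0)"

definition sym_posdef :: "real^'n^'n \<Rightarrow> bool" where
  "sym_posdef S \<longleftrightarrow> transpose S = S \<and> (\<forall>x. x \<noteq> 0 \<longrightarrow> x \<bullet> (S *v x) > 0)"

end

theory Submission
  imports Defs "HOL-Probability.Probability"
begin

(* ---- s1/CoV ---- *)


proposition
 fixes f :: "real^'n \<Rightarrow> real^'n"
  assumes "linear f" "S \<in> lmeasurable"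
  shows measurable_linear_image': "(f ` S) \<in> lmeasurable"
    and measure_linear_image': "measure lebesgue (f ` S) = \<bar>det (matrix f)\<bar> * measure lebesgue S" (is "?Q f S")
proof -
  have "\<forall>S \<in> lmeasurable. (f ` S) \<in> lmeasurable \<and> ?Q f S"
  proof (rule induct_linear_elementary [OF \<open>linear f\<close>]; intro ballI)
    fix f g and S :: "(real,'n) vec set"
    assume "linear f" and "linear g"
      and f [rule_format]: "\<forall>S \<in> lmeasurable. f ` S \<in> lmeasurable \<and> ?Q f S"
      and g [rule_format]: "\<forall>S \<in> lmeasurable. g ` S \<in> lmeasurable \<and> ?Q g S"
      and S: "S \<in> lmeasurable"
    then have gS: "g ` S \<in> lmeasurable"
      by blast
    show "(f \<circ> g) ` S \<in> lmeasurable \<and> ?Q (f \<circ> g) S"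
      using f [OF gS] g [OF S] matrix_compose [OF \<open>linear g\<close> \<open>linear f\<close>]
      by (simp add: o_def image_comp abs_mult det_mul)
  next
    fix f :: "real^'n::_ \<Rightarrow> real^'n::_" and i and S :: "(real^'n::_) set"
    assume "linear f" and 0: "\<And>x. f x $ i = 0" and "S \<in> lmeasurable"
    then have "\<not> inj f"
      by (metis (full_types) linear_injective_imp_surjective one_neq_zero surjE vec_component)
    have detf: "det (matrix f) = 0"
      using \<open>\<not> inj f\<close> det_nz_iff_inj[OF \<open>linear f\<close>] by blast
    show "f ` S \<in> lmeasurable \<and> ?Q f S"
    proof
      show "f ` S \<in> lmeasurable"
        using lmeasurable_iff_indicator_has_integral \<open>linear f\<close> \<open>\<not> inj f\<close> negligible_UNIV negligible_linear_singular_image by blast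
      have "measure lebesgue (f ` S) = 0"
        by (meson \<open>\<not> inj f\<close> \<open>linear f\<close> negligible_imp_measure0 negligible_linear_singular_image)
      also have "\<dots> = \<bar>det (matrix f)\<bar> * measure lebesgue S"
        by (simp add: detf)
      finally show "?Q f S" .
    qed
  next
    fix c and S :: "(real^'n::_) set"
    assume "S \<in> lmeasurable"
    show "(\<lambda>a. \<chi> i. c i * a $ i) ` S \<in> lmeasurable \<and> ?Q (\<lambda>a. \<chi> i. c i * a $ i) S"
    proof
      show "(\<lambda>a. \<chi> i. c i * a $ i) ` S \<in> lmeasurable"
        by (simp add: \<open>S \<in> lmeasurable\<close> measurable_stretch)
      show "?Q (\<lambda>a. \<chi> i. c i * a $ i) S"
        by (simp add: measure_stretch [OF \<open>S \<in> lmeasurable\<close>, of c] axis_def matrix_def det_diagonal)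
    qed
  next
    fix m :: "'n" and n :: "'n" and S :: "(real, 'n) vec set"
    assume "m \<noteq> n" and "S \<in> lmeasurable"
    let ?h = "\<lambda>v::(real, 'n) vec. \<chi> i. v $ Transposition.transpose m n i"
    have lin: "linear ?h"
      by (rule linearI) (simp_all add: plus_vec_def scaleR_vec_def)
    have meq: "measure lebesgue ((\<lambda>v::(real, 'n) vec. \<chi> i. v $ Transposition.transpose m n i) ` cbox a b)
             = measure lebesgue (cbox a b)" for a b
    proof (cases "cbox a b = {}")
      case True then show ?thesis
        by simp
    next
      case False
      then have him: "?h ` (cbox a b) \<noteq> {}"
        by blast
      have eq: "?h ` (cbox a b) = cbox (?h a) (?h b)"
        by (auto simp: image_iff lambda_swap_Galois mem_box_cart) (metis transpose_involutory)+
      show ?thesis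
        using him prod.permute [OF permutes_swap_id, where S=UNIV and g="\<lambda>i. (b - a)$i", symmetric]
        by (simp add: eq content_cbox_cart False)
    qed
    have "(\<chi> i j. if Transposition.transpose m n i = j then 1 else 0) = (\<chi> i j. if j = Transposition.transpose m n i then 1 else (0::real))"
      by (auto intro!: Cart_lambda_cong)
    then have "matrix ?h = transpose(\<chi> i j. mat 1 $ i $ Transposition.transpose m n j)"
      by (auto simp: matrix_eq transpose_def axis_def mat_def matrix_def)
    then have 1: "\<bar>det (matrix ?h)\<bar> = 1"
      by (simp add: det_permute_columns permutes_swap_id sign_swap_id abs_mult)
    show "?h ` S \<in> lmeasurable \<and> ?Q ?h S"
      using measure_linear_sufficient [OF lin \<open>S \<in> lmeasurable\<close>] meq 1 by force
  next
    fix m n :: "'n" and S :: "(real, 'n) vec set"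
    assume "m \<noteq> n" and "S \<in> lmeasurable"
    let ?h = "\<lambda>v::(real, 'n) vec. \<chi> i. if i = m then v $ m + v $ n else v $ i"
    have lin: "linear ?h"
      by (rule linearI) (auto simp: algebra_simps plus_vec_def scaleR_vec_def vec_eq_iff)
    have 1: "det(matrix ?h) = 1"
    proof -
      have "matrix ?h = (\<chi> k. if k = m then row m (mat 1) + 1 *s row n (mat 1) else row k (mat 1 :: real^'n^'n))"
        by (auto simp: matrix_def axis_def row_def mat_def vec_eq_iff)
      then show ?thesis using det_row_operation[OF \<open>m \<noteq> n\<close>, of "mat 1 :: real^'n^'n" 1] by simp
    qed
    have meq: "measure lebesgue (?h ` (cbox a b)) = measure lebesgue (cbox a b)" for a b
    proof (cases "cbox a b = {}")
      case True then show ?thesis by simp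
    next
      case False
      then have ne: "(+) (\<chi> i. if i = n then - a $ n else 0) ` cbox a b \<noteq> {}"
        by auto
      let ?v = "\<chi> i. if i = n then - a $ n else 0"
      have "?h ` cbox a b
            = (+) (\<chi> i. if i = m \<or> i = n then a $ n else 0) ` ?h ` (+) ?v ` (cbox a b)"
        using \<open>m \<noteq> n\<close> unfolding image_comp o_def by (force simp: vec_eq_iff)
      then have "measure lebesgue (?h ` (cbox a b))
               = measure lebesgue ((\<lambda>v. \<chi> i. if i = m then v $ m + v $ n else v $ i) `
                                   (+) ?v ` cbox a b)"
        by (rule ssubst) (rule measure_translation)
      also have "\<dots> = measure lebesgue ((\<lambda>v. \<chi> i. if i = m then v $ m + v $ n else v $ i) ` cbox (?v +a) (?v + b))"
        by (metis (no_types, lifting) cbox_translation)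
      also have "\<dots> = measure lebesgue ((+) ?v ` cbox a b)"
        apply (subst measure_shear_interval)
        using \<open>m \<noteq> n\<close> ne apply auto
        apply (simp add: cbox_translation)
        by (metis cbox_borel cbox_translation measure_completion sets_lborel)
      also have "\<dots> = measure lebesgue (cbox a b)"
        by (rule measure_translation)
        finally show ?thesis .
      qed
    show "?h ` S \<in> lmeasurable \<and> ?Q ?h S"
      using measure_linear_sufficient [OF lin \<open>S \<in> lmeasurable\<close>] meq 1 by force
  qed
  with assms show "(f ` S) \<in> lmeasurable" "?Q f S"
    by metis+
qed


(* ---- s1/CoV2 ---- *)


lemma minv_works:
  fixes A :: "real^'n^'n"
  assumes "invertible A"
  shows "A ** matrix_inv A = mat 1" "matrix_inv A ** A = mat 1"
proof -
  have "\<exists>A'. A ** A' = mat 1 \<and> A' ** A = mat 1" using assms unfolding invertible_def by blast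
  then have "A ** matrix_inv A = mat 1 \<and> matrix_inv A ** A = mat 1"
    unfolding matrix_inv_def by (rule someI_ex)
  then show "A ** matrix_inv A = mat 1" "matrix_inv A ** A = mat 1" by auto
qed

lemma det_minv:
  fixes A :: "real^'n^'n"
  assumes "invertible A"
  shows "det (matrix_inv A) = 1 / det A"
proof -
  have "det A * det (matrix_inv A) = 1"
    using minv_works(1)[OF assms] by (metis det_I det_mul)
  then have "det A \<noteq> 0" by auto
  with \<open>det A * det (matrix_inv A) = 1\<close> show ?thesis by (simp add: eq_divide_eq mult.commute)
qed

lemma lborel_linear_affine:
  fixes M :: "real^'n^'n" and t :: "real^'n"
  assumes "det M \<noteq> 0"
  shows "lborel = density (distr lborel borel (\<lambda>x. t + M *v x)) (\<lambda>_. ennreal \<bar>det M\<bar>)"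
proof (rule lborel_eqI)
  have inv: "invertible M" using assms invertible_det_nz by blast
  define N where "N = matrix_inv M"
  have MN: "M ** N = mat 1" "N ** M = mat 1" using minv_works[OF inv] by (auto simp: N_def)
  have dN: "\<bar>det M\<bar> * \<bar>det N\<bar> = 1"
    using det_minv[OF inv] assms by (simp add: N_def abs_mult[symmetric])
  have [measurable]: "(\<lambda>x. t + M *v x) \<in> borel \<rightarrow>\<^sub>M borel"
    by (intro borel_measurable_continuous_onI continuous_intros linear_continuous_on
        matrix_vector_mul_bounded_linear)
  fix l u :: "real^'n"
  assume le: "\<And>b. b \<in> Basis \<Longrightarrow> l \<bullet> b \<le> u \<bullet> b"
  have pre: "(\<lambda>x. t + M *v x) -` box l u = (+) (- (N *v t)) ` ((*v) N ` box l u)"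
  proof (intro set_eqI iffI)
    fix x assume "x \<in> (\<lambda>x. t + M *v x) -` box l u"
    then have "t + M *v x \<in> box l u" by simp
    moreover have "x = - (N *v t) + N *v (t + M *v x)"
      by (simp add: matrix_vector_right_distrib matrix_vector_mul_assoc MN)
    ultimately show "x \<in> (+) (- (N *v t)) ` ((*v) N ` box l u)" by blast
  next
    fix x assume "x \<in> (+) (- (N *v t)) ` ((*v) N ` box l u)"
    then obtain y where y: "y \<in> box l u" "x = - (N *v t) + N *v y" by blast
    then have "t + M *v x = y"
      by (simp add: matrix_vector_right_distrib matrix_vector_mult_diff_distrib matrix_vector_mul_assoc MN)
    then show "x \<in> (\<lambda>x. t + M *v x) -` box l u" using y by simp
  qed
  have linN: "linear ((*v) N)" by (simp add: matrix_vector_mul_linear)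
  have boxm: "box l u \<in> lmeasurable" by (simp add: lmeasurable_box)
  have Nm: "(*v) N ` box l u \<in> lmeasurable" by (rule measurable_linear_image'[OF linN boxm])
  have Xm: "(+) (- (N *v t)) ` ((*v) N ` box l u) \<in> lmeasurable"
    by (rule measurable_translation[OF Nm])
  have Xb: "(+) (- (N *v t)) ` ((*v) N ` box l u) \<in> sets borel"
  proof -
    have "(\<lambda>x. t + M *v x) -` box l u \<inter> space borel \<in> sets borel"
      by (rule measurable_sets[OF \<open>(\<lambda>x. t + M *v x) \<in> borel \<rightarrow>\<^sub>M borel\<close>]) simp
    then show ?thesis by (simp add: pre)
  qed
  have "measure lebesgue ((+) (- (N *v t)) ` ((*v) N ` box l u)) = \<bar>det N\<bar> * measure lebesgue (box l u)"
    unfolding measure_translation using measure_linear_image'[OF linN boxm] by (simp add: matrix_of_matrix_vector_mul)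
  also have "measure lebesgue (box l u) = (\<Prod>b\<in>Basis. (u - l) \<bullet> b)"
    using le by (simp add: measure_completion)
  finally have meq: "measure lebesgue ((+) (- (N *v t)) ` ((*v) N ` box l u)) = \<bar>det N\<bar> * (\<Prod>b\<in>Basis. (u - l) \<bullet> b)" .
  have "emeasure lborel ((+) (- (N *v t)) ` ((*v) N ` box l u))
      = emeasure lebesgue ((+) (- (N *v t)) ` ((*v) N ` box l u))"
    using Xb by (simp add: emeasure_completion)
  also have "\<dots> = ennreal (measure lebesgue ((+) (- (N *v t)) ` ((*v) N ` box l u)))"
    using Xm by (simp add: emeasure_eq_measure2)
  finally have em: "emeasure lborel ((+) (- (N *v t)) ` ((*v) N ` box l u)) = ennreal (\<bar>det N\<bar> * (\<Prod>b\<in>Basis. (u - l) \<bullet> b))"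
    using meq by simp
  have "emeasure (density (distr lborel borel (\<lambda>x. t + M *v x)) (\<lambda>_. ennreal \<bar>det M\<bar>)) (box l u)
     = ennreal \<bar>det M\<bar> * emeasure (distr lborel borel (\<lambda>x. t + M *v x)) (box l u)"
    by (simp add: emeasure_density nn_integral_cmult_indicator)
  also have "\<dots> = ennreal \<bar>det M\<bar> * emeasure lborel ((\<lambda>x. t + M *v x) -` box l u)"
    by (simp add: emeasure_distr)
  also have "\<dots> = ennreal (\<bar>det M\<bar> * (\<bar>det N\<bar> * (\<Prod>b\<in>Basis. (u - l) \<bullet> b)))"
    unfolding pre em using le by (simp add: ennreal_mult prod_nonneg inner_diff_left)
  also have "\<dots> = (\<Prod>b\<in>Basis. (u - l) \<bullet> b)"
    using dN le by (simp add: mult.assoc[symmetric] prod_nonneg inner_diff_left)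
  finally show "emeasure (density (distr lborel borel (\<lambda>x. t + M *v x)) (\<lambda>_. ennreal \<bar>det M\<bar>)) (box l u)
     = (\<Prod>b\<in>Basis. (u - l) \<bullet> b)" .
qed simp


(* ---- s1/CoV3 ---- *)


lemma affine_meas[measurable]:
  fixes M :: "real^'n^'n" and t :: "real^'n"
  shows "(\<lambda>x. t + M *v x) \<in> borel \<rightarrow>\<^sub>M borel"
  by (intro borel_measurable_continuous_onI continuous_intros linear_continuous_on
        matrix_vector_mul_bounded_linear)

lemma lborel_integrable_linear_iff:
  fixes M :: "real^'n^'n" and t :: "real^'n" and f :: "real^'n \<Rightarrow> real"
  assumes "det M \<noteq> 0" and [measurable]: "f \<in> borel_measurable borel"
  shows "integrable lborel (\<lambda>x. f (t + M *v x)) \<longleftrightarrow> integrable lborel f"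
proof -
  have eq: "lborel = density (distr lborel borel (\<lambda>x. t + M *v x)) (\<lambda>_. ennreal \<bar>det M\<bar>)"
    by (rule lborel_linear_affine[OF assms(1)])
  have "integrable lborel f \<longleftrightarrow> integrable (density (distr lborel borel (\<lambda>x. t + M *v x)) (\<lambda>_. ennreal \<bar>det M\<bar>)) f"
    by (simp only: eq[symmetric])
  also have "\<dots> \<longleftrightarrow> integrable (distr lborel borel (\<lambda>x. t + M *v x)) (\<lambda>x. \<bar>det M\<bar> *\<^sub>R f x)"
    by (rule integrable_density) auto
  also have "\<dots> \<longleftrightarrow> integrable lborel (\<lambda>x. \<bar>det M\<bar> *\<^sub>R f (t + M *v x))"
    by (rule integrable_distr_eq) auto
  also have "\<dots> \<longleftrightarrow> integrable lborel (\<lambda>x. f (t + M *v x))"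
    using assms(1) by simp
  finally show ?thesis by simp
qed

lemma lborel_integral_linear:
  fixes M :: "real^'n^'n" and t :: "real^'n" and f :: "real^'n \<Rightarrow> real"
  assumes "det M \<noteq> 0" and [measurable]: "f \<in> borel_measurable borel"
  shows "(\<integral>x. f x \<partial>lborel) = \<bar>det M\<bar> * (\<integral>x. f (t + M *v x) \<partial>lborel)"
proof -
  have eq: "lborel = density (distr lborel borel (\<lambda>x. t + M *v x)) (\<lambda>_. ennreal \<bar>det M\<bar>)"
    by (rule lborel_linear_affine[OF assms(1)])
  have "(\<integral>x. f x \<partial>lborel) = (\<integral>x. f x \<partial>density (distr lborel borel (\<lambda>x. t + M *v x)) (\<lambda>_. ennreal \<bar>det M\<bar>))"
    by (simp only: eq[symmetric])
  also have "\<dots> = (\<integral>x. \<bar>det M\<bar> *\<^sub>R f x \<partial>distr lborel borel (\<lambda>x. t + M *v x))"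
    by (rule integral_density) auto
  also have "\<dots> = (\<integral>x. \<bar>det M\<bar> *\<^sub>R f (t + M *v x) \<partial>lborel)"
    by (rule integral_distr) auto
  also have "\<dots> = \<bar>det M\<bar> * (\<integral>x. f (t + M *v x) \<partial>lborel)"
    by simp
  finally show ?thesis .
qed


(* ---- s1/Prod ---- *)


lemma Basis_vec_range: "(Basis :: (real^'n) set) = range (\<lambda>i. axis i 1)"
  by (auto simp: Basis_vec_def)

lemma lborel_prod_vec:
  fixes g :: "'n::finite \<Rightarrow> real \<Rightarrow> real"
  assumes int: "\<And>i. integrable lborel (g i)"
  shows "integrable lborel (\<lambda>x::real^'n. \<Prod>i\<in>UNIV. g i (x$i))"
    and "(\<integral>x. (\<Prod>i\<in>UNIV. g i (x$i)) \<partial>(lborel::(real^'n) measure)) = (\<Prod>i\<in>UNIV. \<integral>t. g i t \<partial>lborel)"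
proof -
  define ix where "ix b = (SOME i. b = axis i (1::real))" for b :: "real^'n"
  have ix: "ix (axis i 1) = i" for i
    unfolding ix_def by (rule some_equality) (auto simp: axis_eq_axis)
  define G where "G b = g (ix b)" for b
  have injax: "inj (\<lambda>i::'n. axis i (1::real))" by (auto simp: inj_on_def axis_eq_axis)
  have prodeq: "(\<Prod>i\<in>UNIV. g i (x$i)) = (\<Prod>b\<in>Basis. G b (x \<bullet> b))" for x :: "real^'n"
    unfolding Basis_vec_range by (subst prod.reindex[OF injax]) (simp add: G_def ix inner_axis)
  have Gm[measurable]: "G b \<in> borel_measurable borel" for b
    unfolding G_def using int by (auto intro: borel_measurable_integrable)
  have intG: "integrable lborel (G b)" for b unfolding G_def by (rule int)
  interpret product_sigma_finite "\<lambda>_::real^'n. (lborel :: real measure)"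
    by (simp add: product_sigma_finite_def sigma_finite_lborel)
  have comp: "(\<Sum>b\<in>Basis. f b *\<^sub>R b) \<bullet> c = f c" if "c \<in> Basis" for f :: "real^'n \<Rightarrow> real" and c
    using that by (simp add: inner_sum_left inner_Basis if_distrib cong: if_cong)
  have F: "(\<lambda>f. \<Prod>b\<in>Basis. G b ((\<Sum>b\<in>Basis. f b *\<^sub>R b) \<bullet> b)) \<in> space (\<Pi>\<^sub>M b\<in>Basis. lborel) \<rightarrow> UNIV"
    by simp
  have eqf: "(\<Prod>b\<in>Basis. G b ((\<Sum>b\<in>Basis. f b *\<^sub>R b) \<bullet> b)) = (\<Prod>b\<in>Basis. G b (f b))" for f
    by (intro prod.cong refl) (simp add: comp)
  have pint: "integrable (\<Pi>\<^sub>M b\<in>Basis. lborel) (\<lambda>f. \<Prod>b\<in>Basis. G b (f b))"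
    by (rule product_integrable_prod) (auto intro: intG)
  have pI: "(\<integral>f. (\<Prod>b\<in>Basis. G b (f b)) \<partial>(\<Pi>\<^sub>M b\<in>Basis. lborel)) = (\<Prod>b\<in>Basis. \<integral>t. G b t \<partial>lborel)"
    by (rule product_integral_prod) (auto intro: intG)
  have mfun[measurable]: "(\<lambda>x::real^'n. \<Prod>b\<in>Basis. G b (x \<bullet> b)) \<in> borel_measurable borel"
    by measurable
  show "integrable lborel (\<lambda>x::real^'n. \<Prod>i\<in>UNIV. g i (x$i))"
    unfolding prodeq
    apply (subst lborel_eq)
    apply (subst integrable_distr_eq)
      apply measurable
    using pint by (simp add: eqf)
  have "(\<integral>x. (\<Prod>i\<in>UNIV. g i (x$i)) \<partial>(lborel::(real^'n) measure)) = (\<integral>x. (\<Prod>b\<in>Basis. G b (x \<bullet> b)) \<partial>(lborel::(real^'n) measure))"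
    by (simp only: prodeq)
  also have "\<dots> = (\<integral>f. (\<Prod>b\<in>Basis. G b ((\<Sum>b\<in>Basis. f b *\<^sub>R b) \<bullet> b)) \<partial>(\<Pi>\<^sub>M b\<in>Basis. lborel))"
    by (subst lborel_eq) (rule integral_distr; measurable)
  also have "\<dots> = (\<Prod>b\<in>Basis. \<integral>t. G b t \<partial>lborel)"
    by (simp add: eqf pI)
  also have "\<dots> = (\<Prod>i\<in>UNIV. \<integral>t. g i t \<partial>lborel)"
    unfolding Basis_vec_range by (subst prod.reindex[OF injax]) (simp add: G_def ix)
  finally show "(\<integral>x. (\<Prod>i\<in>UNIV. g i (x$i)) \<partial>(lborel::(real^'n) measure)) = (\<Prod>i\<in>UNIV. \<integral>t. g i t \<partial>lborel)" .
qed


(* ---- s1/Gm ---- *)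


definition phi :: "real^'n \<Rightarrow> real" where
  "phi x = exp (-(x \<bullet> x)/2) / sqrt ((2*pi)^CARD('n))"

lemma phi_prod: fixes x :: "real^'n" shows "phi x = (\<Prod>i\<in>UNIV. std_normal_density (x$i))"
proof -
  have "(\<Prod>i\<in>UNIV. std_normal_density (x$i)) = (\<Prod>i\<in>UNIV. (1 / sqrt (2 * pi)) * exp (- (x$i)\<^sup>2 / 2))"
    by (simp only: std_normal_density_def)
  also have "\<dots> = (1 / sqrt (2 * pi))^CARD('n) * exp (\<Sum>i\<in>UNIV. - (x$i)\<^sup>2 / 2)"
    unfolding prod.distrib prod_constant by (simp add: exp_sum)
  also have "(\<Sum>i\<in>UNIV. - (x$i)\<^sup>2 / 2) = -(x \<bullet> x)/2"
    by (simp add: inner_vec_def sum_negf sum_divide_distrib power2_eq_square)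
  moreover have "sqrt ((2*pi)^CARD('n)) = sqrt (2*pi)^CARD('n)" by (rule real_sqrt_power)
  ultimately show ?thesis
    by (simp add: phi_def power_divide)
qed

lemma phi_pos: "phi x > 0" unfolding phi_def by simp

lemma phi_measurable[measurable]: "phi \<in> borel_measurable borel"
  unfolding phi_def by measurable

lemma std_mom_int: "integrable lborel (\<lambda>t. std_normal_density t * t ^ n)"
  by (rule integrable_std_normal_moment)

lemma std_mom_0: "(\<integral>t. std_normal_density t * t ^ 0 \<partial>lborel) = 1" by simp
lemma std_mom_1: "(\<integral>t. std_normal_density t * t ^ 1 \<partial>lborel) = 0"
  using integral_std_normal_moment_odd[of 0] by simp
lemma std_mom_2: "(\<integral>t. std_normal_density t * t ^ 2 \<partial>lborel) = 1"
  using integral_std_normal_moment_even[of 1] by simp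

lemma std_mom_1': "(\<integral>t. std_normal_density t * t \<partial>lborel) = 0"
  using std_mom_1 by simp

lemma std_mom_2': "(\<integral>t. std_normal_density t * (t * t) \<partial>lborel) = 1"
  using std_mom_2 by (simp add: power2_eq_square)

lemma phi_mono_prod:
  fixes e :: "'n::finite \<Rightarrow> nat"
  shows "integrable lborel (\<lambda>x::real^'n. phi x * (\<Prod>i\<in>UNIV. (x$i) ^ e i))"
    and "(\<integral>x. phi x * (\<Prod>i\<in>UNIV. (x$i) ^ e i) \<partial>lborel) = (\<Prod>i\<in>UNIV. \<integral>t. std_normal_density t * t ^ e i \<partial>lborel)"
proof -
  have eq: "phi x * (\<Prod>i\<in>UNIV. (x$i) ^ e i) = (\<Prod>i\<in>UNIV. (\<lambda>i t. std_normal_density t * t ^ e i) i (x$i))" for x :: "real^'n"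
    by (simp add: phi_prod prod.distrib)
  show "integrable lborel (\<lambda>x::real^'n. phi x * (\<Prod>i\<in>UNIV. (x$i) ^ e i))"
    unfolding eq by (rule lborel_prod_vec(1)) (rule std_mom_int)
  show "(\<integral>x. phi x * (\<Prod>i\<in>UNIV. (x$i) ^ e i) \<partial>lborel) = (\<Prod>i\<in>UNIV. \<integral>t. std_normal_density t * t ^ e i \<partial>lborel)"
    unfolding eq by (rule lborel_prod_vec(2)) (rule std_mom_int)
qed

lemma prod_pow_delta:
  fixes x :: "real^'n"
  shows "(\<Prod>i\<in>UNIV. (x$i) ^ (if i = j then 1 else 0)) = x$j"
proof -
  have "(\<Prod>i\<in>UNIV. (x$i) ^ (if i = j then 1 else 0)) = (\<Prod>i\<in>UNIV. if i = j then x$i else 1)"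
    by (intro prod.cong) auto
  then show ?thesis by simp
qed

lemma phi_int0: shows "integrable lborel (phi :: real^'n \<Rightarrow> real)" "(\<integral>x. phi x \<partial>(lborel::(real^'n) measure)) = (1::real)"
  using phi_mono_prod[where 'n='n, of "\<lambda>_::'n. 0"] by (simp_all add: std_mom_0)

lemma phi_int1:
  fixes j :: "'n::finite"
  shows "integrable lborel (\<lambda>x::real^'n. phi x * x$j)" "(\<integral>x. phi x * x$j \<partial>(lborel::(real^'n) measure)) = 0"
proof -
  let ?e = "\<lambda>i. if i = j then 1 else (0::nat)"
  have eq: "phi x * x$j = phi x * (\<Prod>i\<in>UNIV. (x$i) ^ ?e i)" for x :: "real^'n"
    by (simp add: prod_pow_delta)
  show "integrable lborel (\<lambda>x::real^'n. phi x * x$j)"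
    unfolding eq by (rule phi_mono_prod(1))
  have "(\<Prod>i\<in>UNIV. \<integral>t. std_normal_density t * t ^ ?e i \<partial>lborel) = 0"
    by (rule prod_zero) (auto intro!: bexI[of _ j] simp: std_mom_1')
  then show "(\<integral>x. phi x * x$j \<partial>(lborel::(real^'n) measure)) = 0"
    unfolding eq phi_mono_prod(2) .
qed

lemma phi_int2:
  fixes j k :: "'n::finite"
  shows "integrable lborel (\<lambda>x::real^'n. phi x * (x$j * x$k))"
    "(\<integral>x. phi x * (x$j * x$k) \<partial>(lborel::(real^'n) measure)) = (if j = k then 1 else 0)"
proof -
  let ?e = "\<lambda>i. (if i = j then 1 else (0::nat)) + (if i = k then 1 else 0)"
  have eq: "phi x * (x$j * x$k) = phi x * (\<Prod>i\<in>UNIV. (x$i) ^ ?e i)" for x :: "real^'n"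
    by (simp only: power_add prod.distrib prod_pow_delta)
  show "integrable lborel (\<lambda>x::real^'n. phi x * (x$j * x$k))"
    unfolding eq by (rule phi_mono_prod(1))
  have "(\<Prod>i\<in>UNIV. \<integral>t. std_normal_density t * t ^ ?e i \<partial>lborel) = (if j = k then 1 else 0)"
  proof (cases "j = k")
    case True
    then show ?thesis
      by (auto intro!: prod.neutral simp: std_mom_0 std_mom_2')
  next
    case False
    have "(\<Prod>i\<in>UNIV. \<integral>t. std_normal_density t * t ^ ?e i \<partial>lborel) = 0"
      using False by (intro prod_zero) (auto intro!: bexI[of _ j] simp: std_mom_1')
    then show ?thesis using False by simp
  qed
  then show "(\<integral>x. phi x * (x$j * x$k) \<partial>(lborel::(real^'n) measure)) = (if j = k then 1 else 0)"
    unfolding eq phi_mono_prod(2) .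
qed


(* ---- s1/Quad ---- *)


definition fro :: "real^'n^'n \<Rightarrow> real" where
  "fro B = (\<Sum>i\<in>UNIV. \<Sum>j\<in>UNIV. (B$i$j)^2)"

lemma quad_expand:
  fixes B :: "real^'n^'n" and y x :: "real^'n"
  shows "phi x * ((y + B *v x) \<bullet> (y + B *v x)) =
    (\<Sum>i\<in>UNIV. (y$i)^2 * phi x + (\<Sum>j\<in>UNIV. (2 * y$i * B$i$j) * (phi x * x$j))
        + (\<Sum>j\<in>UNIV. \<Sum>k\<in>UNIV. (B$i$j * B$i$k) * (phi x * (x$j * x$k))))"
proof -
  have sq: "(a + (\<Sum>j\<in>UNIV. b j)) * (a + (\<Sum>j\<in>UNIV. b j)) = a^2 + (\<Sum>j\<in>UNIV. 2 * a * b j) + (\<Sum>j\<in>UNIV. \<Sum>k\<in>UNIV. b j * b k)"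
    for a :: real and b :: "'n \<Rightarrow> real"
    by (simp add: algebra_simps power2_eq_square sum_distrib_left sum_distrib_right sum_product)
  have "phi x * ((y + B *v x) \<bullet> (y + B *v x)) = phi x * (\<Sum>i\<in>UNIV. (y$i + (\<Sum>j\<in>UNIV. B$i$j * x$j)) * (y$i + (\<Sum>j\<in>UNIV. B$i$j * x$j)))"
    by (simp add: inner_vec_def matrix_vector_mult_def)
  also have "\<dots> = (\<Sum>i\<in>UNIV. phi x * ((y$i)^2 + (\<Sum>j\<in>UNIV. 2 * y$i * (B$i$j * x$j)) + (\<Sum>j\<in>UNIV. \<Sum>k\<in>UNIV. (B$i$j * x$j) * (B$i$k * x$k))))"
    by (simp only: sq sum_distrib_left)
  also have "\<dots> = (\<Sum>i\<in>UNIV. (y$i)^2 * phi x + (\<Sum>j\<in>UNIV. (2 * y$i * B$i$j) * (phi x * x$j))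
        + (\<Sum>j\<in>UNIV. \<Sum>k\<in>UNIV. (B$i$j * B$i$k) * (phi x * (x$j * x$k))))"
    by (intro sum.cong refl) (simp add: algebra_simps sum_distrib_left)
  finally show ?thesis .
qed

lemma quad_int:
  fixes B :: "real^'n^'n" and y :: "real^'n"
  shows "integrable lborel (\<lambda>x. phi x * ((y + B *v x) \<bullet> (y + B *v x)))"
    and "(\<integral>x. phi x * ((y + B *v x) \<bullet> (y + B *v x)) \<partial>lborel) = y \<bullet> y + fro B"
proof -
  note I0 = phi_int0[where 'n='n] and I1 = phi_int1[where 'n='n] and I2 = phi_int2[where 'n='n]
  show "integrable lborel (\<lambda>x. phi x * ((y + B *v x) \<bullet> (y + B *v x)))"
    unfolding quad_expand
    by (simp add: I0 I1 I2)
  have "(\<integral>x. phi x * ((y + B *v x) \<bullet> (y + B *v x)) \<partial>lborel)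
    = (\<Sum>i\<in>UNIV. (y$i)^2 * 1 + (\<Sum>j\<in>UNIV. (2 * y$i * B$i$j) * 0)
        + (\<Sum>j\<in>UNIV. \<Sum>k\<in>UNIV. (B$i$j * B$i$k) * (if j = k then 1 else 0)))"
    unfolding quad_expand
    by (simp add: integral_sum integrable_sum integrable_add integrable_mult_right I0 I1 I2 integral_add
        del: mult_zero_right mult_1_right)
  also have "\<dots> = y \<bullet> y + fro B"
    by (simp add: fro_def inner_vec_def sum.distrib power2_eq_square if_distrib cong: if_cong)
  finally show "(\<integral>x. phi x * ((y + B *v x) \<bullet> (y + B *v x)) \<partial>lborel) = y \<bullet> y + fro B" .
qed

lemma sq_int:
  shows "integrable lborel (\<lambda>x::real^'n. phi x * (x \<bullet> x))"
    and "(\<integral>x. phi x * (x \<bullet> x) \<partial>(lborel::(real^'n) measure)) = real CARD('n)"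
proof -
  note I2 = phi_int2[where 'n='n]
  have eq: "phi x * (x \<bullet> x) = (\<Sum>i\<in>UNIV. phi x * (x$i * x$i))" for x :: "real^'n"
    by (simp add: inner_vec_def sum_distrib_left)
  show "integrable lborel (\<lambda>x::real^'n. phi x * (x \<bullet> x))"
    unfolding eq by (simp add: I2)
  show "(\<integral>x. phi x * (x \<bullet> x) \<partial>(lborel::(real^'n) measure)) = real CARD('n)"
    unfolding eq by (simp add: integral_sum I2)
qed


(* ---- s2/Gauss ---- *)


lemma minv_unique:
  fixes X Y :: "real^'n^'n"
  assumes "X ** Y = mat 1" "Y ** X = mat 1"
  shows "matrix_inv X = Y"
proof -
  have inv: "invertible X" using assms unfolding invertible_def by blast
  have "matrix_inv X = matrix_inv X ** (X ** Y)" using assms by simp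
  also have "\<dots> = (matrix_inv X ** X) ** Y" by (simp add: matrix_mul_assoc)
  also have "\<dots> = Y" using minv_works[OF inv] by simp
  finally show ?thesis .
qed

lemma inner_transpose_mv:
  fixes A :: "real^'n^'n" and a b :: "real^'n"
  shows "a \<bullet> (transpose A *v b) = (A *v a) \<bullet> b"
  by (metis dot_lmul_matrix inner_commute transpose_matrix_vector)

lemma gauss_pdf_LLT:
  fixes L :: "real^'n^'n" and m w :: "real^'n"
  assumes "det L \<noteq> 0"
  shows "gauss_pdf m (L ** transpose L) w = phi (matrix_inv L *v (w - m)) / \<bar>det L\<bar>"
proof -
  have inv: "invertible L" using assms invertible_det_nz by blast
  define N where "N = matrix_inv L"
  have LN: "L ** N = mat 1" "N ** L = mat 1" using minv_works[OF inv] by (auto simp: N_def)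
  have "matrix_inv (L ** transpose L) = transpose N ** N"
  proof (rule minv_unique)
    have "transpose L ** transpose N = mat 1"
      by (metis LN(2) matrix_transpose_mul transpose_mat)
    then show "L ** transpose L ** (transpose N ** N) = mat 1"
      by (metis LN(1) matrix_mul_assoc matrix_mul_lid)
    have "transpose N ** transpose L = mat 1"
      by (metis LN(1) matrix_transpose_mul transpose_mat)
    then show "transpose N ** N ** (L ** transpose L) = mat 1"
      by (metis LN(2) matrix_mul_assoc matrix_mul_lid)
  qed
  then have q: "(w - m) \<bullet> (matrix_inv (L ** transpose L) *v (w - m)) = (N *v (w - m)) \<bullet> (N *v (w - m))"
    by (simp only: matrix_vector_mul_assoc[symmetric] inner_transpose_mv)
  have d: "sqrt ((2 * pi) ^ CARD('n) * det (L ** transpose L)) = sqrt ((2 * pi) ^ CARD('n)) * \<bar>det L\<bar>"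
    by (simp add: det_mul real_sqrt_mult)
  show ?thesis
    unfolding gauss_pdf_def q d phi_def N_def[symmetric] by simp
qed


(* ---- s3/KL ---- *)


lemma ln_phi: "ln (phi (z::real^'n)) = -(z \<bullet> z)/2 - ln (sqrt ((2*pi)^CARD('n)))"
  unfolding phi_def by (simp add: ln_div)

lemma affine_meas2[measurable]:
  fixes N :: "real^'n^'n" and m :: "real^'n"
  shows "(\<lambda>w. N *v (w - m)) \<in> borel \<rightarrow>\<^sub>M borel"
proof -
  have "(\<lambda>w. N *v (w - m)) = (\<lambda>w. (- (N *v m)) + N *v w)"
    by (auto simp: matrix_vector_mult_diff_distrib)
  then show ?thesis using affine_meas[of "- (N *v m)" N] by simp
qed

lemma gauss_meas[measurable]:
  fixes L :: "real^'n^'n"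
  assumes "det L \<noteq> 0"
  shows "gauss_pdf m (L ** transpose L) \<in> borel_measurable borel"
  unfolding gauss_pdf_LLT[OF assms] by measurable

lemma gauss_pos:
  fixes L :: "real^'n^'n"
  assumes "det L \<noteq> 0"
  shows "gauss_pdf m (L ** transpose L) w > 0"
  unfolding gauss_pdf_LLT[OF assms] using assms by (intro divide_pos_pos phi_pos) simp

lemma inv_cancel:
  fixes L :: "real^'n^'n"
  assumes "det L \<noteq> 0"
  shows "matrix_inv L *v (L *v x) = x" "L *v (matrix_inv L *v x) = x"
proof -
  have inv: "invertible L" using assms invertible_det_nz by blast
  show "matrix_inv L *v (L *v x) = x" "L *v (matrix_inv L *v x) = x"
    using minv_works[OF inv] by (simp_all add: matrix_vector_mul_assoc)
qed

lemma gauss_int: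
  fixes T :: "real^'n^'n"
  assumes "det T \<noteq> 0"
  shows "integrable lborel (gauss_pdf mu (T ** transpose T))"
    and "(\<integral>w. gauss_pdf mu (T ** transpose T) w \<partial>lborel) = 1"
proof -
  have eq: "gauss_pdf mu (T ** transpose T) (mu + T *v x) = phi x / \<bar>det T\<bar>" for x
    unfolding gauss_pdf_LLT[OF assms] by (simp add: inv_cancel[OF assms])
  have "integrable lborel (\<lambda>x. gauss_pdf mu (T ** transpose T) (mu + T *v x))"
    unfolding eq using phi_int0(1)[where 'n='n] by (simp add: divide_inverse)
  then show "integrable lborel (gauss_pdf mu (T ** transpose T))"
    using lborel_integrable_linear_iff[OF assms gauss_meas[OF assms]] by blast
  have "(\<integral>w. gauss_pdf mu (T ** transpose T) w \<partial>lborel) = \<bar>det T\<bar> * (\<integral>x. phi x / \<bar>det T\<bar> \<partial>(lborel::(real^'n) measure))"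
    using lborel_integral_linear[OF assms gauss_meas[OF assms, of mu], where t=mu] by (simp add: eq)
  also have "\<dots> = 1" using assms phi_int0(2)[where 'n='n] by simp
  finally show "(\<integral>w. gauss_pdf mu (T ** transpose T) w \<partial>lborel) = 1" .
qed

lemma KL_gauss:
  fixes T L :: "real^'n^'n" and m mu :: "real^'n"
  assumes dT: "det T \<noteq> 0" and dL: "det L \<noteq> 0"
  defines "p \<equiv> gauss_pdf m (L ** transpose L)" and "q \<equiv> gauss_pdf mu (T ** transpose T)"
  defines "B \<equiv> matrix_inv T ** L" and "y \<equiv> matrix_inv T *v (m - mu)"
  shows "integrable lborel (\<lambda>w. p w * ln (p w / q w))"
    and "KL_dens p q = ((y \<bullet> y + fro B) - real CARD('n)) / 2 + ln \<bar>det T\<bar> - ln \<bar>det L\<bar>"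
proof -
  define K where "K = ln \<bar>det T\<bar> - ln \<bar>det L\<bar>"
  define c where "c = ln (sqrt ((2*pi)^CARD('n)))"
  have pe: "p (m + L *v x) = phi x / \<bar>det L\<bar>" for x
    unfolding p_def gauss_pdf_LLT[OF dL] by (simp add: inv_cancel[OF dL])
  have arg: "matrix_inv T *v (m + L *v x - mu) = y + B *v x" for x
  proof -
    have "m + L *v x - mu = (m - mu) + L *v x" by simp
    then show ?thesis
      by (simp only: y_def B_def matrix_vector_right_distrib matrix_vector_mul_assoc)
  qed
  have qe: "q (m + L *v x) = phi (y + B *v x) / \<bar>det T\<bar>" for x
    unfolding q_def gauss_pdf_LLT[OF dT] arg ..
  define G where "G x = (1/2) * (phi x * ((y + B *v x) \<bullet> (y + B *v x))) - (1/2) * (phi x * (x \<bullet> x)) + K * phi x" for x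
  have he: "p (m + L *v x) * ln (p (m + L *v x) / q (m + L *v x)) = (1 / \<bar>det L\<bar>) * G x" for x
  proof -
    have a: "phi x > 0" "phi (y + B *v x) > 0" by (rule phi_pos)+
    have "ln (p (m + L *v x) / q (m + L *v x)) = ln (phi x) - ln \<bar>det L\<bar> - (ln (phi (y + B *v x)) - ln \<bar>det T\<bar>)"
      unfolding pe qe using a dL dT by (simp add: ln_div ln_mult)
    also have "\<dots> = ((y + B *v x) \<bullet> (y + B *v x))/2 - (x \<bullet> x)/2 + K"
      unfolding ln_phi K_def by simp
    finally have lnq: "ln (p (m + L *v x) / q (m + L *v x)) = ((y + B *v x) \<bullet> (y + B *v x))/2 - (x \<bullet> x)/2 + K" .
    show ?thesis unfolding lnq unfolding pe G_def using dL by (simp add: field_simps)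
  qed
  have intG: "integrable lborel G"
    unfolding G_def using quad_int(1)[of y B] sq_int(1)[where 'n='n] phi_int0(1)[where 'n='n] by simp
  have intG2: "(\<integral>x. G x \<partial>lborel) = ((y \<bullet> y + fro B) - real CARD('n)) / 2 + K"
    unfolding G_def using quad_int[of y B] sq_int[where 'n='n] phi_int0[where 'n='n] by simp
  have hm[measurable]: "(\<lambda>w. p w * ln (p w / q w)) \<in> borel_measurable borel"
    unfolding p_def q_def using gauss_meas[OF dL, of m] gauss_meas[OF dT, of mu] by measurable
  have "integrable lborel (\<lambda>x. p (m + L *v x) * ln (p (m + L *v x) / q (m + L *v x)))"
    unfolding he using intG by simp
  then show "integrable lborel (\<lambda>w. p w * ln (p w / q w))"
    using lborel_integrable_linear_iff[OF dL hm, where t=m] by simp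
  have "KL_dens p q = \<bar>det L\<bar> * (\<integral>x. p (m + L *v x) * ln (p (m + L *v x) / q (m + L *v x)) \<partial>lborel)"
    unfolding KL_dens_def using lborel_integral_linear[OF dL hm, where t=m] by simp
  also have "\<dots> = (\<integral>x. G x \<partial>lborel)"
    unfolding he using dL by simp
  finally show "KL_dens p q = ((y \<bullet> y + fro B) - real CARD('n)) / 2 + ln \<bar>det T\<bar> - ln \<bar>det L\<bar>"
    unfolding intG2 K_def by simp
qed


(* ---- s4/Mat ---- *)


lemma minv_I: "matrix_inv (mat 1 :: real^'n^'n) = mat 1"
  by (rule minv_unique) simp_all

lemma KL_gauss_nonneg:
  fixes T L :: "real^'n^'n" and m mu :: "real^'n"
  assumes dT: "det T \<noteq> 0" and dL: "det L \<noteq> 0"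
  shows "KL_dens (gauss_pdf m (L ** transpose L)) (gauss_pdf mu (T ** transpose T)) \<ge> 0"
proof -
  let ?p = "gauss_pdf m (L ** transpose L)" and ?q = "gauss_pdf mu (T ** transpose T)"
  have pt: "?p w - ?q w \<le> ?p w * ln (?p w / ?q w)" for w
  proof -
    have p: "?p w > 0" and q: "?q w > 0" using gauss_pos[OF dL] gauss_pos[OF dT] by auto
    have "ln (?q w / ?p w) \<le> ?q w / ?p w - 1" using p q by (intro ln_le_minus_one) simp
    moreover have "ln (?p w / ?q w) = - ln (?q w / ?p w)" using p q by (simp add: ln_div)
    ultimately have "1 - ?q w / ?p w \<le> ln (?p w / ?q w)" by simp
    then have "?p w * (1 - ?q w / ?p w) \<le> ?p w * ln (?p w / ?q w)"
      using p by (intro mult_left_mono) auto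
    then show ?thesis using p by (simp add: algebra_simps)
  qed
  have "0 = (\<integral>w. ?p w - ?q w \<partial>lborel)"
    using gauss_int[OF dL, of m] gauss_int[OF dT, of mu] by simp
  also have "\<dots> \<le> (\<integral>w. ?p w * ln (?p w / ?q w) \<partial>lborel)"
    by (intro integral_mono pt KL_gauss(1)[OF dT dL] Bochner_Integration.integrable_diff
        gauss_int(1)[OF dL] gauss_int(1)[OF dT])
  finally show ?thesis unfolding KL_dens_def .
qed

lemma fro_det_ineq:
  fixes C :: "real^'n^'n"
  assumes "det C \<noteq> 0"
  shows "fro C - real CARD('n) - 2 * ln \<bar>det C\<bar> \<ge> 0"
proof -
  have d1: "det (mat 1 :: real^'n^'n) \<noteq> 0" by simp
  have "KL_dens (gauss_pdf 0 (C ** transpose C)) (gauss_pdf 0 (mat 1 ** transpose (mat 1 :: real^'n^'n))) \<ge> 0"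
    by (rule KL_gauss_nonneg[OF d1 assms])
  then show ?thesis
    unfolding KL_gauss(2)[OF d1 assms] minv_I by simp
qed

lemma fro_trace: "fro M = trace (M ** transpose M)"
  by (simp add: fro_def trace_def matrix_matrix_mult_def transpose_def power2_eq_square)

lemma fro_orth_right:
  fixes M Q :: "real^'n^'n"
  assumes "orthogonal_matrix Q"
  shows "fro (M ** Q) = fro M"
proof -
  have "(M ** Q) ** transpose (M ** Q) = M ** (Q ** transpose Q) ** transpose M"
    by (simp add: matrix_transpose_mul matrix_mul_assoc)
  then show ?thesis using assms unfolding fro_trace orthogonal_matrix_def by simp
qed

lemma fro_orth_left:
  fixes M Q :: "real^'n^'n"
  assumes "orthogonal_matrix Q"
  shows "fro (Q ** M) = fro M"
proof -
  have "trace ((Q ** M) ** transpose (Q ** M)) = trace (Q ** (M ** transpose M ** transpose Q))"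
    by (simp add: matrix_transpose_mul matrix_mul_assoc)
  also have "\<dots> = trace ((M ** transpose M ** transpose Q) ** Q)" by (rule trace_mul_sym)
  also have "\<dots> = trace (M ** transpose M)"
    using assms unfolding orthogonal_matrix_def by (metis matrix_mul_assoc matrix_mul_rid)
  finally show ?thesis unfolding fro_trace .
qed


(* ---- s5/Emat ---- *)


definition Emat :: "real^'n^'n \<Rightarrow> 'n \<Rightarrow> real \<Rightarrow> real^'n^'n" where
  "Emat Q k a = Q ** diag_mat (\<chi> i. if i = k then a else 1) ** transpose Q"

lemma det_diag_mat: "det (diag_mat d) = (\<Prod>i\<in>UNIV. d$i)"
  unfolding diag_mat_def by (subst det_diagonal) auto

lemma Emat_det:
  fixes Q :: "real^'n^'n"
  assumes "orthogonal_matrix Q"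
  shows "det (Emat Q k a) = a"
proof -
  have "det Q * det (transpose Q) = 1"
    using assms unfolding orthogonal_matrix_def by (metis det_I det_mul)
  moreover have "det (diag_mat (\<chi> i. if i = k then a else 1) :: real^'n^'n) = a"
    unfolding det_diag_mat by (simp add: prod.If_cases)
  ultimately show ?thesis unfolding Emat_def det_mul by (simp add: algebra_simps)
qed

lemma fro_diag:
  fixes X :: "real^'n^'n"
  shows "fro (X ** diag_mat d) = (\<Sum>i\<in>UNIV. \<Sum>j\<in>UNIV. (X$i$j * d$j)^2)"
proof -
  have "(X ** diag_mat d) $ i $ j = X$i$j * d$j" for i j
    by (simp add: matrix_matrix_mult_def diag_mat_def if_distrib cong: if_cong)
  then show ?thesis by (simp add: fro_def)
qed

lemma Emat_fro:
  fixes M Q :: "real^'n^'n"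
  assumes Q: "orthogonal_matrix Q" and Qk: "Q *v axis k 1 = e"
  shows "fro (M ** Emat Q k a) = fro M + (a^2 - 1) * ((M *v e) \<bullet> (M *v e))"
proof -
  let ?D = "diag_mat (\<chi> i. if i = k then a else 1) :: real^'n^'n"
  let ?X = "M ** Q"
  have "fro (M ** Emat Q k a) = fro (?X ** ?D ** transpose Q)"
    unfolding Emat_def by (simp add: matrix_mul_assoc)
  also have "\<dots> = fro (?X ** ?D)" using Q by (simp add: fro_orth_right)
  also have "\<dots> = (\<Sum>i\<in>UNIV. \<Sum>j\<in>UNIV. (?X$i$j)^2) + (a^2 - 1) * (\<Sum>i\<in>UNIV. (?X$i$k)^2)"
  proof -
    have "(\<Sum>j\<in>UNIV. (?X$i$j * (\<chi> i. if i = k then a else 1)$j)^2) = (\<Sum>j\<in>UNIV. (?X$i$j)^2) + (a^2 - 1) * (?X$i$k)^2" for i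
    proof -
      have "(\<Sum>j\<in>UNIV. (?X$i$j * (\<chi> i. if i = k then a else 1)$j)^2) = (\<Sum>j\<in>UNIV. (?X$i$j)^2 + (if j = k then (a^2 - 1) * (?X$i$k)^2 else 0))"
        by (intro sum.cong refl) (auto simp: power_mult_distrib algebra_simps)
      then show ?thesis by (simp add: sum.distrib)
    qed
    then show ?thesis unfolding fro_diag by (simp add: sum.distrib sum_distrib_left)
  qed
  also have "\<dots> = fro M + (a^2 - 1) * ((M *v e) \<bullet> (M *v e))"
  proof -
    have "?X $ i $ k = (M *v e) $ i" for i
    proof -
      have "(M *v e) = ?X *v axis k 1" using Qk by (simp add: matrix_vector_mul_assoc[symmetric])
      then show ?thesis by (simp add: matrix_vector_mult_def axis_def if_distrib cong: if_cong)
    qed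
    then show ?thesis
      using fro_orth_right[OF Q, of M] by (simp add: fro_def inner_vec_def power2_eq_square)
  qed
  finally show ?thesis .
qed

lemma Emat_apply:
  fixes Q :: "real^'n^'n"
  assumes Q: "orthogonal_matrix Q" and Qk: "Q *v axis k 1 = e"
  shows "Emat Q k a *v x = x + ((a - 1) * (e \<bullet> x)) *\<^sub>R e"
proof -
  let ?D = "diag_mat (\<chi> i. if i = k then a else 1) :: real^'n^'n"
  have D1: "(diag_mat d *v y) $ i = d$i * y$i" for d y :: "real^'n" and i
    by (simp add: matrix_vector_mult_def diag_mat_def if_distrib[of "\<lambda>z. z * _"] cong: if_cong)
  have D: "?D *v y = y + ((a - 1) * y$k) *\<^sub>R axis k 1" for y
    by (simp add: vec_eq_iff D1 axis_def algebra_simps)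
  have yk: "(transpose Q *v x) $ k = e \<bullet> x"
  proof -
    have "(transpose Q *v x) $ k = (transpose Q *v x) \<bullet> axis k 1" by (simp add: inner_axis)
    also have "\<dots> = x \<bullet> (Q *v axis k 1)" by (simp add: dot_lmul_matrix)
    finally show ?thesis using Qk by (simp add: inner_commute)
  qed
  have "Emat Q k a *v x = Q *v (?D *v (transpose Q *v x))"
    unfolding Emat_def by (simp only: matrix_vector_mul_assoc matrix_mul_assoc)
  also have "\<dots> = Q *v (transpose Q *v x) + ((a - 1) * (e \<bullet> x)) *\<^sub>R (Q *v axis k 1)"
    unfolding D yk by (simp add: matrix_vector_right_distrib matrix_vector_mult_scaleR)
  also have "\<dots> = x + ((a - 1) * (e \<bullet> x)) *\<^sub>R e"
  proof -
    have "Q *v (transpose Q *v x) = x"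
      using Q unfolding orthogonal_matrix_def by (metis matrix_vector_mul_assoc matrix_vector_mul_lid)
    then show ?thesis using Qk by simp
  qed
  finally show ?thesis .
qed


(* ---- s6/Bound ---- *)


lemma lower_bound:
  fixes B :: "real^'n^'n" and e :: "real^'n"
  assumes dB: "det B \<noteq> 0" and e: "norm e = 1"
  shows "norm (B *v e) > 0"
    and "fro B - 2 * ln \<bar>det B\<bar> \<ge> real CARD('n) - 1 + (norm (B *v e))^2 - 2 * ln (norm (B *v e))"
proof -
  define \<rho> where "\<rho> = norm (B *v e)"
  have "B *v e \<noteq> 0"
  proof
    assume "B *v e = 0"
    then have "e = 0" using inv_cancel(1)[OF dB, of e] by simp
    then show False using e by simp
  qed
  then show rp: "norm (B *v e) > 0" by simp
  then have rp': "\<rho> > 0" by (simp add: \<rho>_def)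
  obtain k :: 'n where True by simp
  obtain Q where Q: "orthogonal_matrix Q" "Q *v axis k 1 = e"
    using orthogonal_matrix_exists_basis[OF e] by metis
  define C where "C = B ** Emat Q k (1/\<rho>)"
  have dC: "det C = det B / \<rho>" unfolding C_def det_mul Emat_det[OF Q(1)] by simp
  have fC: "fro C = fro B + 1 - \<rho>^2"
  proof -
    have "(B *v e) \<bullet> (B *v e) = \<rho>^2" by (simp add: \<rho>_def dot_square_norm)
    then show ?thesis unfolding C_def Emat_fro[OF Q] using rp' by (simp add: field_simps)
  qed
  have "det C \<noteq> 0" using dB rp' dC by simp
  from fro_det_ineq[OF this] have "fro C - real CARD('n) - 2 * ln \<bar>det C\<bar> \<ge> 0" .
  moreover have "ln \<bar>det C\<bar> = ln \<bar>det B\<bar> - ln \<rho>"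
    unfolding dC using dB rp' by (simp add: ln_div)
  ultimately show "fro B - 2 * ln \<bar>det B\<bar> \<ge> real CARD('n) - 1 + (norm (B *v e))^2 - 2 * ln (norm (B *v e))"
    unfolding fC \<rho>_def[symmetric] by simp
qed

lemma oned:
  fixes k a r \<rho> :: real
  assumes k: "k > 0" and r: "r > 0" and q: "k*r^2 - a*r - 1 = 0" and p: "\<rho> > 0"
  shows "k*\<rho>^2 - 2*a*\<rho> - 2*ln \<rho> \<ge> k*r^2 - 2*a*r - 2*ln r"
proof -
  have "ln (\<rho>/r) \<le> \<rho>/r - 1" using p r by (intro ln_le_minus_one) simp
  then have h1: "ln \<rho> - ln r \<le> \<rho>/r - 1" using p r by (simp add: ln_div)
  have rinv: "1/r = k*r - a" using q r by (simp add: field_simps power2_eq_square)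
  have h3: "r*(k*r - a) = 1" using q by (simp add: algebra_simps power2_eq_square)
  have "(\<rho> - r) * (k*r - a) = \<rho> * (k*r - a) - r*(k*r - a)" by (simp add: left_diff_distrib)
  also have "\<dots> = \<rho>/r - 1" unfolding h3 rinv[symmetric] using r by simp
  finally have h2: "\<rho>/r - 1 = (\<rho> - r) * (k*r - a)" by simp
  have id: "k*\<rho>^2 - 2*a*\<rho> - (k*r^2 - 2*a*r) - 2*((\<rho> - r) * (k*r - a)) = k*(\<rho> - r)^2"
    by (simp add: algebra_simps power2_eq_square)
  have "k*(\<rho> - r)^2 \<ge> 0" using k by simp
  then show ?thesis using h1 h2 id by linarith
qed


(* ---- s7/Plane ---- *)


lemma Wapply:
  fixes muh nuh x :: "real^'n" and M :: "real^2^2"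
  defines "W \<equiv> (\<chi> i k. if k = 1 then muh $ i else nuh $ i) :: real^2^'n"
  shows "(mat 1 + W ** M ** transpose W) *v x = x + (M$1$1*(muh \<bullet> x) + M$1$2*(nuh \<bullet> x)) *\<^sub>R muh
          + (M$2$1*(muh \<bullet> x) + M$2$2*(nuh \<bullet> x)) *\<^sub>R nuh"
proof -
  have W1: "W$i$1 = muh$i" and W2: "W$i$2 = nuh$i" for i unfolding W_def by simp_all
  have "(W ** M ** transpose W) *v x = W *v (M *v (transpose W *v x))"
    by (simp only: matrix_vector_mul_assoc matrix_mul_assoc)
  also have "transpose W *v x = vector [muh \<bullet> x, nuh \<bullet> x]"
    by (simp add: vec_eq_iff forall_2 matrix_vector_mult_def transpose_def W1 W2 inner_vec_def mult.commute)
  also have "M *v vector [muh \<bullet> x, nuh \<bullet> x] = vector [M$1$1*(muh \<bullet> x) + M$1$2*(nuh \<bullet> x), M$2$1*(muh \<bullet> x) + M$2$2*(nuh \<bullet> x)]"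
    by (simp add: vec_eq_iff forall_2 matrix_vector_mult_def sum_2)
  also have "W *v vector [M$1$1*(muh \<bullet> x) + M$1$2*(nuh \<bullet> x), M$2$1*(muh \<bullet> x) + M$2$2*(nuh \<bullet> x)]
     = (M$1$1*(muh \<bullet> x) + M$1$2*(nuh \<bullet> x)) *\<^sub>R muh + (M$2$1*(muh \<bullet> x) + M$2$2*(nuh \<bullet> x)) *\<^sub>R nuh"
    by (simp add: vec_eq_iff matrix_vector_mult_def sum_2 W1 W2 mult.commute)
  finally show ?thesis by (simp add: matrix_vector_mult_add_rdistrib add.assoc)
qed

lemma fro_I: "fro (mat 1 :: real^'n^'n) = real CARD('n)"
  by (simp add: fro_def mat_def if_distrib[of "\<lambda>x. x^2"] cong: if_cong)

lemma plane_main: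
  fixes muh nuh :: "real^'n" and vpar vperp c d2 :: real
  assumes nm: "norm muh = 1" and nn: "norm nuh = 1" and o: "muh \<bullet> nuh = 0"
    and Vp: "vpar^2 + vperp^2 > 0" and d2: "d2^2 = 1"
  defines "s \<equiv> sqrt (vpar^2 + vperp^2)"
  defines "A2 \<equiv> (1 / s) *\<^sub>R (vector [vector [c * vpar, - d2 * vperp], vector [c * vperp, d2 * vpar]] :: real^2^2)"
  defines "W \<equiv> (\<chi> i k. if k = 1 then muh $ i else nuh $ i) :: real^2^'n"
  defines "Bs \<equiv> mat 1 + W ** (A2 - mat 1) ** transpose W"
  shows "Bs *v muh = (c / s) *\<^sub>R (vpar *\<^sub>R muh + vperp *\<^sub>R nuh)"
    and "fro Bs = real CARD('n) - 1 + c^2"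
    and "\<bar>det Bs\<bar> = \<bar>c\<bar>"
proof -
  have mm: "muh \<bullet> muh = 1" using nm by (simp add: norm_eq_1)
  have nn': "nuh \<bullet> nuh = 1" using nn by (simp add: norm_eq_1)
  have on: "nuh \<bullet> muh = 0" using o by (simp add: inner_commute)
  have sp: "s > 0" unfolding s_def using Vp by simp
  have ss: "s^2 = vpar^2 + vperp^2" unfolding s_def using Vp by simp
  have A2e: "A2$1$1 = c* vpar/s" "A2$1$2 = - d2* vperp/s" "A2$2$1 = c* vperp/s" "A2$2$2 = d2* vpar/s"
    unfolding A2_def by simp_all
  have m12: "(mat 1 :: real^2^2)$1$1 = 1" "(mat 1 :: real^2^2)$1$2 = 0" "(mat 1 :: real^2^2)$2$1 = 0" "(mat 1 :: real^2^2)$2$2 = 1"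
    by (simp_all add: mat_def)
  have Bsx: "Bs *v x = x + ((c* vpar/s - 1)*(muh \<bullet> x) + (- d2* vperp/s)*(nuh \<bullet> x)) *\<^sub>R muh
          + ((c* vperp/s)*(muh \<bullet> x) + (d2* vpar/s - 1)*(nuh \<bullet> x)) *\<^sub>R nuh" for x
    unfolding Bs_def W_def Wapply by (simp add: A2e m12)
  show "Bs *v muh = (c / s) *\<^sub>R (vpar *\<^sub>R muh + vperp *\<^sub>R nuh)"
    unfolding Bsx using mm on by (simp add: algebra_simps scaleR_add_right)
  define R2 where "R2 = (1 / s) *\<^sub>R (vector [vector [vpar, - d2 * vperp], vector [vperp, d2 * vpar]] :: real^2^2)"
  define R where "R = mat 1 + W ** (R2 - mat 1) ** transpose W"
  have R2e: "R2$1$1 = vpar/s" "R2$1$2 = - d2* vperp/s" "R2$2$1 = vperp/s" "R2$2$2 = d2* vpar/s"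
    unfolding R2_def by simp_all
  have Rx: "R *v x = x + ((vpar/s - 1)*(muh \<bullet> x) + (- d2* vperp/s)*(nuh \<bullet> x)) *\<^sub>R muh
          + ((vperp/s)*(muh \<bullet> x) + (d2* vpar/s - 1)*(nuh \<bullet> x)) *\<^sub>R nuh" for x
    unfolding R_def W_def Wapply by (simp add: R2e m12)
  have Rnorm: "norm (R *v x) = norm x" for x
  proof -
    define a where "a = muh \<bullet> x"
    define b where "b = nuh \<bullet> x"
    define p where "p = (vpar/s - 1)*a + (- d2* vperp/s)*b"
    define q where "q = (vperp/s)*a + (d2* vpar/s - 1)*b"
    have Rx': "R *v x = x + p *\<^sub>R muh + q *\<^sub>R nuh" unfolding Rx a_def b_def p_def q_def ..
    have xm: "x \<bullet> muh = a" "x \<bullet> nuh = b" "muh \<bullet> x = a" "nuh \<bullet> x = b"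
      by (simp_all add: a_def b_def inner_commute)
    have "(R *v x) \<bullet> (R *v x) = x \<bullet> x + p * a + q * b + (p * a + p * p + q * b + q * q)"
      unfolding Rx' by (simp add: inner_add_left inner_add_right xm mm nn' o on) (simp add: algebra_simps)
    then have e1: "(R *v x) \<bullet> (R *v x) = x \<bullet> x + 2*p*a + 2*q*b + p^2 + q^2"
      by (simp add: power2_eq_square)
    have e2: "2*p*a + 2*q*b + p^2 + q^2 = (a + p)^2 + (b + q)^2 - a^2 - b^2"
      by (simp add: algebra_simps power2_eq_square)
    have e3: "(a + p)^2 + (b + q)^2 = a^2 + b^2"
    proof -
      have "a + p = (vpar*a - d2* vperp*b)/s" "b + q = (vperp*a + d2* vpar*b)/s"
        unfolding p_def q_def using sp by (simp_all add: field_simps)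
      then have "(a + p)^2 + (b + q)^2 = ((vpar*a - d2* vperp*b)^2 + (vperp*a + d2* vpar*b)^2) / s^2"
        by (metis add_divide_distrib power_divide)
      also have "(vpar*a - d2* vperp*b)^2 + (vperp*a + d2* vpar*b)^2 = (vpar^2 + vperp^2) * (a^2 + b^2*d2^2)"
        by (simp add: algebra_simps power2_eq_square)
      finally show ?thesis using sp d2 by (simp add: ss[symmetric])
    qed
    from e1 e2 e3 have "(R *v x) \<bullet> (R *v x) = x \<bullet> x" by linarith
    then show ?thesis by (simp add: norm_eq_sqrt_inner)
  qed
  have otR: "orthogonal_transformation ((*v) R)"
    unfolding orthogonal_transformation using Rnorm by (simp add: matrix_vector_mul_linear)
  then have oR: "orthogonal_matrix R" and dR: "\<bar>det R\<bar> = 1"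
    using orthogonal_transformation_matrix[of "(*v) R"] orthogonal_transformation_det[OF otR]
    by (simp_all add: matrix_of_matrix_vector_mul)
  obtain k :: 'n where True by simp
  obtain Q where Q: "orthogonal_matrix Q" "Q *v axis k 1 = muh"
    using orthogonal_matrix_exists_basis[OF nm] by metis
  define E where "E = Emat Q k c"
  have Ex: "E *v x = x + ((c - 1) * (muh \<bullet> x)) *\<^sub>R muh" for x
    unfolding E_def by (rule Emat_apply[OF Q])
  have BRE: "Bs = R ** E"
    unfolding matrix_eq
  proof
    fix x
    define a where "a = muh \<bullet> x"
    define b where "b = nuh \<bullet> x"
    have "(R ** E) *v x = R *v (E *v x)" by (simp add: matrix_vector_mul_assoc)
    also have "\<dots> = x + ((c - 1) * a) *\<^sub>R muh + ((vpar/s - 1)*(c*a) + (- d2* vperp/s)*b) *\<^sub>R muh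
          + ((vperp/s)*(c*a) + (d2* vpar/s - 1)*b) *\<^sub>R nuh"
    proof -
      have i1: "muh \<bullet> (E *v x) = c * a"
        unfolding Ex by (simp add: inner_add_right mm a_def[symmetric] algebra_simps)
      have i2: "nuh \<bullet> (E *v x) = b"
        unfolding Ex by (simp add: inner_add_right on b_def[symmetric])
      show ?thesis unfolding Rx i1 i2 unfolding Ex a_def[symmetric] by simp
    qed
    also have "\<dots> = x + ((c - 1) * a + ((vpar/s - 1)*(c*a) + (- d2* vperp/s)*b)) *\<^sub>R muh
          + ((vperp/s)*(c*a) + (d2* vpar/s - 1)*b) *\<^sub>R nuh"
      by (simp only: scaleR_add_left add.assoc)
    also have "(c - 1) * a + ((vpar/s - 1)*(c*a) + (- d2* vperp/s)*b) = (c* vpar/s - 1)*a + (- d2* vperp/s)*b"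
      by (simp add: algebra_simps)
    also have "(vperp/s)*(c*a) + (d2* vpar/s - 1)*b = (c* vperp/s)*a + (d2* vpar/s - 1)*b"
      by (simp add: algebra_simps)
    also have "x + ((c* vpar/s - 1)*a + (- d2* vperp/s)*b) *\<^sub>R muh + ((c* vperp/s)*a + (d2* vpar/s - 1)*b) *\<^sub>R nuh = Bs *v x"
      unfolding Bsx a_def b_def ..
    finally show "Bs *v x = (R ** E) *v x" by simp
  qed
  show "\<bar>det Bs\<bar> = \<bar>c\<bar>"
    unfolding BRE det_mul E_def Emat_det[OF Q(1)] using dR by (simp add: abs_mult)
  have "fro Bs = fro E" unfolding BRE by (rule fro_orth_left[OF oR])
  also have "\<dots> = fro (mat 1 ** E)" by simp
  also have "\<dots> = real CARD('n) - 1 + c^2"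
    unfolding E_def Emat_fro[OF Q] fro_I using mm by simp
  finally show "fro Bs = real CARD('n) - 1 + c^2" .
qed


(* ---- s8/Main1 ---- *)


lemma c_facts:
  fixes u V :: real
  assumes V: "V > 0"
  assumes d1_def: "d1 = (if u \<ge> 0 then 1 else -1 :: real)"
  assumes c_def: "c = (u * sqrt V + d1 * sqrt (4 + u\<^sup>2 * (4 + V))) / (2 * (1 + u\<^sup>2))"
  assumes r_def: "r = (\<bar>u\<bar> * sqrt V + sqrt (4 + u\<^sup>2 * (4 + V))) / (2 * (1 + u\<^sup>2))"
  shows "c = d1 * r" "r > 0" "(1 + u^2) * r^2 - (\<bar>u\<bar> * sqrt V) * r - 1 = 0"
    "u * c = \<bar>u\<bar> * r" "c^2 = r^2" "\<bar>c\<bar> = r"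
proof -
  define s where "s = sqrt (4 + u\<^sup>2 * (4 + V))"
  have sp: "s > 0" unfolding s_def using V by (simp add: add_pos_nonneg)
  have s2: "s^2 = 4 + u\<^sup>2 * (4 + V)" unfolding s_def using V by (simp add: add_nonneg_nonneg)
  have k: "2 * (1 + u\<^sup>2) > 0" by (simp add: add_pos_nonneg)
  show cr: "c = d1 * r"
    unfolding c_def r_def d1_def s_def[symmetric] by (auto simp: field_simps)
  show rp: "r > 0" unfolding r_def s_def[symmetric] using sp k
    by (intro divide_pos_pos add_nonneg_pos) (simp_all add: V less_imp_le)
  have sV: "(sqrt V)^2 = V" using V by simp
  have gen: "kk * ((aa + ss) / (2 * kk))^2 - aa * ((aa + ss) / (2 * kk)) - 1 = (ss^2 - aa^2 - 4 * kk) / (4 * kk)"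
    if "kk > 0" for kk aa ss :: real
    using that by (simp add: field_simps power2_eq_square)
  have r': "r = (\<bar>u\<bar> * sqrt V + s) / (2 * (1 + u^2))" unfolding r_def s_def ..
  have "(1 + u^2) * r^2 - (\<bar>u\<bar> * sqrt V) * r - 1 = (s^2 - (\<bar>u\<bar> * sqrt V)^2 - 4 * (1 + u^2)) / (4 * (1 + u^2))"
    unfolding r' by (rule gen) (simp add: add_pos_nonneg)
  also have "s^2 - (\<bar>u\<bar> * sqrt V)^2 - 4 * (1 + u^2) = 0"
    unfolding s2 power_mult_distrib sV by (simp add: algebra_simps)
  finally show "(1 + u^2) * r^2 - (\<bar>u\<bar> * sqrt V) * r - 1 = 0" by simp
  show "u * c = \<bar>u\<bar> * r" unfolding cr d1_def by auto
  show "c^2 = r^2" unfolding cr d1_def by auto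
  show "\<bar>c\<bar> = r" unfolding cr d1_def using rp by auto
qed

lemma diag_mult: "diag_mat a ** diag_mat b = diag_mat (\<chi> i. a$i * b$i)"
  by (simp add: diag_mat_def matrix_matrix_mult_def vec_eq_iff if_distrib[of "\<lambda>x. x * _"] cong: if_cong)

lemma diag_transpose: "transpose (diag_mat a) = diag_mat a"
  by (simp add: diag_mat_def transpose_def vec_eq_iff)

lemma diag_one: "diag_mat (\<chi> i. 1) = mat 1"
  by (simp add: diag_mat_def mat_def vec_eq_iff)


(* ---- s8/Main2 ---- *)


lemma matrix_add_rdistrib': "((B + C) ** A) = (B ** A) + (C ** A)"
  for A B C :: "real^'n^'n"
  by (vector matrix_matrix_mult_def sum.distrib[symmetric] field_simps)

theorem theorem1:
  fixes mu w w' muh nuh :: "real^'n"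
    and S U :: "real^'n^'n"
    and dd :: "real^'n"
    and u vpar vperp :: real
  assumes "CARD('n) \<ge> 2"
    and "sym_posdef S"
    and "orthogonal_matrix U"
    and "\<forall>i. dd $ i > 0"
    and "S = U ** diag_mat dd ** transpose U"
    and "w' \<noteq> mu"
    and "norm muh = 1" and "norm nuh = 1" and "muh \<bullet> nuh = 0"
    and "u *\<^sub>R muh = diag_mat (\<chi> i. 1 / sqrt (dd $ i)) ** transpose U *v (w - mu)"
    and "vpar *\<^sub>R muh + vperp *\<^sub>R nuh
           = diag_mat (\<chi> i. 1 / sqrt (dd $ i)) ** transpose U *v (w' - mu)"
  shows "\<exists>delta1 delta2 :: real. delta1 \<in> {-1, 1} \<and> delta2 \<in> {-1, 1} \<and>
    (let V = vpar\<^sup>2 + vperp\<^sup>2;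
         c = (u * sqrt V + delta1 * sqrt (4 + u\<^sup>2 * (4 + V))) / (2 * (1 + u\<^sup>2));
         A2 = (1 / sqrt V) *\<^sub>R (vector [vector [c * vpar, - delta2 * vperp],
                                          vector [c * vperp, delta2 * vpar]] :: real^2^2);
         W = (\<chi> i k. if k = 1 then muh $ i else nuh $ i) :: real^2^'n;
         Astar = mat 1 + U ** diag_mat (\<chi> i. sqrt (dd $ i))
                   ** (W ** (A2 - mat 1) ** transpose W)
                   ** diag_mat (\<chi> i. 1 / sqrt (dd $ i)) ** transpose U;
         bstar = w' - Astar *v w
     in invertible Astar \<and> w' = Astar *v w + bstar
        \<and> (\<forall>A b. invertible A \<and> w' = A *v w + b \<longrightarrow>
              KL_affine mu S Astar bstar \<le> KL_affine mu S A b)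
        \<and> Astar *v mu + bstar = Astar *v (mu - w) + w')"
proof -
  note U = assms(3) and ddp = assms(4) and SU = assms(5) and ww = assms(6)
    and nm = assms(7) and nn = assms(8) and o = assms(9) and zu = assms(10) and zv = assms(11)
  define D where "D = diag_mat (\<chi> i. sqrt (dd $ i))"
  define Di where "Di = diag_mat (\<chi> i. 1 / sqrt (dd $ i))"
  define T where "T = U ** D"
  define Ti where "Ti = Di ** transpose U"
  have e1: "(\<chi> i. sqrt (dd$i) * (1 / sqrt (dd$i))) = ((\<chi> i. 1) :: real^'n)"
    "(\<chi> i. 1 / sqrt (dd$i) * sqrt (dd$i)) = ((\<chi> i. 1) :: real^'n)"
    using ddp by (simp_all add: vec_eq_iff less_imp_neq[symmetric])
  have DDi: "D ** Di = mat 1" "Di ** D = mat 1"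
    by (simp_all only: D_def Di_def diag_mult vec_lambda_beta e1 diag_one)
  have UU: "U ** transpose U = mat 1" "transpose U ** U = mat 1" using U unfolding orthogonal_matrix_def by auto
  have TTi: "T ** Ti = mat 1"
  proof -
    have "T ** Ti = U ** (D ** Di) ** transpose U" unfolding T_def Ti_def by (simp add: matrix_mul_assoc)
    then show ?thesis using DDi UU by simp
  qed
  have TiT: "Ti ** T = mat 1"
  proof -
    have "Ti ** T = Di ** (transpose U ** U) ** D" unfolding T_def Ti_def by (simp add: matrix_mul_assoc)
    then show ?thesis using DDi UU by simp
  qed
  have detTTi: "det T * det Ti = 1" using TTi by (metis det_I det_mul)
  then have dT: "det T \<noteq> 0" by auto
  have invT: "matrix_inv T = Ti" by (rule minv_unique[OF TTi TiT])
  have ST: "S = T ** transpose T"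
  proof -
    have "D ** transpose D = diag_mat dd"
      unfolding D_def diag_transpose diag_mult using ddp by (simp add: vec_eq_iff less_imp_le)
    then show ?thesis unfolding SU T_def matrix_transpose_mul by (metis matrix_mul_assoc)
  qed
  define z' where "z' = vpar *\<^sub>R muh + vperp *\<^sub>R nuh"
  have zv': "Ti *v (w' - mu) = z'" unfolding z'_def Ti_def Di_def using zv by simp
  have zu': "Ti *v (w - mu) = u *\<^sub>R muh" unfolding Ti_def Di_def using zu by simp
  define V where "V = vpar\<^sup>2 + vperp\<^sup>2"
  have mm: "muh \<bullet> muh = 1" using nm by (simp add: norm_eq_1)
  have nn': "nuh \<bullet> nuh = 1" using nn by (simp add: norm_eq_1)
  have on: "nuh \<bullet> muh = 0" using o by (simp add: inner_commute)
  have zz: "z' \<bullet> z' = V"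
    unfolding z'_def V_def by (simp add: inner_add_left inner_add_right mm nn' o on power2_eq_square)
  have z'nz: "z' \<noteq> 0"
  proof
    assume "z' = 0"
    then have "T *v (Ti *v (w' - mu)) = 0" unfolding zv' by simp
    then have "w' - mu = 0" using TTi by (simp add: matrix_vector_mul_assoc)
    then show False using ww by simp
  qed
  have Vp: "V > 0" using zz z'nz by (metis inner_gt_zero_iff)
  have nz': "norm z' = sqrt V" using zz by (simp add: norm_eq_sqrt_inner)
  have TTix: "T *v (Ti *v x) = x" for x using TTi by (simp add: matrix_vector_mul_assoc)
  have KLf: "KL_affine mu S A b = (fro (Ti ** A ** T) + (z' - u *\<^sub>R ((Ti ** A ** T) *v muh)) \<bullet> (z' - u *\<^sub>R ((Ti ** A ** T) *v muh)) - real CARD('n)) / 2 - ln \<bar>det (Ti ** A ** T)\<bar>"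
    if dA: "det A \<noteq> 0" and wb: "w' = A *v w + b" for A b
  proof -
    define B where "B = Ti ** A ** T"
    have dAT: "det (A ** T) \<noteq> 0" using dA dT by (simp add: det_mul)
    have SA: "A ** S ** transpose A = (A ** T) ** transpose (A ** T)"
      unfolding ST by (simp add: matrix_transpose_mul matrix_mul_assoc)
    have KLg: "KL_affine mu S A b = ((Ti *v (A *v mu + b - mu)) \<bullet> (Ti *v (A *v mu + b - mu)) + fro B - real CARD('n)) / 2
        + ln \<bar>det T\<bar> - ln \<bar>det (A ** T)\<bar>"
    proof -
      have "KL_affine mu S A b = KL_dens (gauss_pdf (A *v mu + b) ((A ** T) ** transpose (A ** T))) (gauss_pdf mu (T ** transpose T))"
        unfolding KL_affine_def SA by (simp add: ST)
      also have "\<dots> = ((Ti *v (A *v mu + b - mu)) \<bullet> (Ti *v (A *v mu + b - mu)) + fro (Ti ** (A ** T)) - real CARD('n)) / 2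
        + ln \<bar>det T\<bar> - ln \<bar>det (A ** T)\<bar>"
        unfolding KL_gauss(2)[OF dT dAT] invT ..
      finally show ?thesis unfolding B_def by (simp add: matrix_mul_assoc)
    qed
    have yeq: "Ti *v (A *v mu + b - mu) = z' - u *\<^sub>R (B *v muh)"
    proof -
      have e: "A *v mu + b - mu = (w' - mu) - A *v (T *v (Ti *v (w - mu)))"
        using wb by (simp add: TTix matrix_vector_mult_diff_distrib algebra_simps)
      have BB: "Ti *v (A *v (T *v y)) = B *v y" for y by (simp add: B_def matrix_vector_mul_assoc matrix_mul_assoc)
      have "Ti *v (A *v mu + b - mu) = Ti *v (w' - mu) - Ti *v (A *v (T *v (Ti *v (w - mu))))"
        unfolding e by (rule matrix_vector_mult_diff_distrib)
      then have "Ti *v (A *v mu + b - mu) = Ti *v (w' - mu) - B *v (Ti *v (w - mu))"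
        unfolding BB .
      then show ?thesis unfolding zv' zu' by (simp add: matrix_vector_mult_scaleR)
    qed
    have dB: "det B = det A" unfolding B_def det_mul using detTTi by (simp add: algebra_simps)
    have lnAT: "ln \<bar>det (A ** T)\<bar> = ln \<bar>det A\<bar> + ln \<bar>det T\<bar>"
      unfolding det_mul using dA dT by (simp add: abs_mult ln_mult)
    show ?thesis unfolding KLg yeq lnAT B_def[symmetric] dB by simp
  qed
  define d1 where "d1 = (if u \<ge> 0 then 1 else -1 :: real)"
  define c where "c = (u * sqrt V + d1 * sqrt (4 + u\<^sup>2 * (4 + V))) / (2 * (1 + u\<^sup>2))"
  define r where "r = (\<bar>u\<bar> * sqrt V + sqrt (4 + u\<^sup>2 * (4 + V))) / (2 * (1 + u\<^sup>2))"
  have cf: "c = d1 * r" "r > 0" "(1 + u^2) * r^2 - (\<bar>u\<bar> * sqrt V) * r - 1 = 0"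
    "u * c = \<bar>u\<bar> * r" "c^2 = r^2" "\<bar>c\<bar> = r"
    using c_facts[OF Vp d1_def c_def r_def] by auto
  define A2 where "A2 = (1 / sqrt V) *\<^sub>R (vector [vector [c * vpar, - 1 * vperp],
                                          vector [c * vperp, 1 * vpar]] :: real^2^2)"
  define W where "W = ((\<chi> i k. if k = 1 then muh $ i else nuh $ i) :: real^2^'n)"
  define Bs where "Bs = mat 1 + W ** (A2 - mat 1) ** transpose W"
  have PM: "Bs *v muh = (c / sqrt V) *\<^sub>R (vpar *\<^sub>R muh + vperp *\<^sub>R nuh)"
    "fro Bs = real CARD('n) - 1 + c^2" "\<bar>det Bs\<bar> = \<bar>c\<bar>"
    using plane_main[OF nm nn o, of vpar vperp 1 c] Vp unfolding V_def Bs_def A2_def W_def by simp_all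
  define Astar where "Astar = mat 1 + U ** diag_mat (\<chi> i. sqrt (dd $ i))
                   ** (W ** (A2 - mat 1) ** transpose W)
                   ** diag_mat (\<chi> i. 1 / sqrt (dd $ i)) ** transpose U"
  define bstar where "bstar = w' - Astar *v w"
  have AT: "Astar = T ** Bs ** Ti"
  proof -
    let ?X = "W ** (A2 - mat 1) ** transpose W"
    have "T ** Bs ** Ti = T ** Ti + T ** ?X ** Ti"
      unfolding Bs_def matrix_add_ldistrib matrix_add_rdistrib' by simp
    also have "T ** ?X ** Ti = U ** D ** ?X ** Di ** transpose U"
      unfolding T_def Ti_def by (simp add: matrix_mul_assoc)
    finally have "T ** Bs ** Ti = mat 1 + U ** D ** ?X ** Di ** transpose U" unfolding TTi .
    then show ?thesis unfolding Astar_def D_def Di_def by simp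
  qed
  have BsA: "Ti ** Astar ** T = Bs"
  proof -
    have "Ti ** Astar ** T = (Ti ** T) ** Bs ** (Ti ** T)" unfolding AT by (simp add: matrix_mul_assoc)
    then show ?thesis unfolding TiT by simp
  qed
  have dBs: "det Bs \<noteq> 0" using PM(3) cf(2,6) by auto
  have dAs: "det Astar \<noteq> 0"
  proof -
    have "det Astar = det Bs * (det T * det Ti)" unfolding AT det_mul by (simp add: algebra_simps)
    then show ?thesis using dBs detTTi by simp
  qed
  define M where "M = real CARD('n) - 1 + V + ((1 + u^2) * r^2 - 2 * (\<bar>u\<bar> * sqrt V) * r - 2 * ln r)"
  have sV: "sqrt V > 0" using Vp by simp
  have sV2: "(sqrt V)^2 = V" using Vp by simp
  have wbs: "w' = Astar *v w + bstar" unfolding bstar_def by simp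
  have KLstar: "2 * KL_affine mu S Astar bstar + real CARD('n) = M"
  proof -
    have "2 * KL_affine mu S Astar bstar + real CARD('n) = fro Bs + (z' - u *\<^sub>R (Bs *v muh)) \<bullet> (z' - u *\<^sub>R (Bs *v muh)) - 2 * ln \<bar>det Bs\<bar>"
      unfolding KLf[OF dAs wbs, unfolded BsA] by (simp add: field_simps)
    also have "z' - u *\<^sub>R (Bs *v muh) = (1 - u * c / sqrt V) *\<^sub>R z'"
      unfolding PM(1) z'_def[symmetric] by (simp add: algebra_simps)
    also have "((1 - u * c / sqrt V) *\<^sub>R z') \<bullet> ((1 - u * c / sqrt V) *\<^sub>R z') = (1 - u * c / sqrt V)^2 * V"
      by (simp add: zz power2_eq_square)
    also have "(1 - u * c / sqrt V)^2 * V = V - 2 * (\<bar>u\<bar> * sqrt V) * r + u^2 * r^2"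
    proof -
      have "(1 - u * c / sqrt V)^2 * V = V - 2 * (u * c) * (V / sqrt V) + (u * c)^2 * (V / (sqrt V)^2)"
        using sV by (simp add: power2_eq_square field_simps)
      also have "V / sqrt V = sqrt V" using sV sV2 by (simp add: field_simps power2_eq_square)
      also have "V / (sqrt V)^2 = 1" using sV2 Vp by simp
      finally show ?thesis unfolding cf(4) by (simp add: power_mult_distrib algebra_simps)
    qed
    finally show ?thesis unfolding PM(2) PM(3) cf(6) cf(5) M_def by (simp add: algebra_simps)
  qed
  have lower: "2 * KL_affine mu S A b + real CARD('n) \<ge> M" if iA: "invertible A" and wb: "w' = A *v w + b" for A b
  proof -
    have dA: "det A \<noteq> 0" using iA invertible_det_nz by blast
    define B where "B = Ti ** A ** T"
    have dB: "det B \<noteq> 0" unfolding B_def det_mul using dA detTTi by (simp add: algebra_simps)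
    define \<rho> where "\<rho> = norm (B *v muh)"
    have rp: "\<rho> > 0" and LB: "fro B - 2 * ln \<bar>det B\<bar> \<ge> real CARD('n) - 1 + \<rho>^2 - 2 * ln \<rho>"
      using lower_bound[OF dB nm] unfolding \<rho>_def by auto
    have yy: "(z' - u *\<^sub>R (B *v muh)) \<bullet> (z' - u *\<^sub>R (B *v muh)) = V - 2 * u * (z' \<bullet> (B *v muh)) + u^2 * \<rho>^2"
    proof -
      have bb: "(B *v muh) \<bullet> (B *v muh) = \<rho>^2" unfolding \<rho>_def by (simp add: dot_square_norm)
      have cm: "(B *v muh) \<bullet> z' = z' \<bullet> (B *v muh)" by (rule inner_commute)
      show ?thesis by (simp add: inner_diff_left inner_diff_right zz bb cm algebra_simps power2_eq_square)
    qed
    have cs: "u * (z' \<bullet> (B *v muh)) \<le> \<bar>u\<bar> * sqrt V * \<rho>"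
    proof -
      have "\<bar>z' \<bullet> (B *v muh)\<bar> \<le> norm z' * \<rho>" unfolding \<rho>_def by (rule Cauchy_Schwarz_ineq2)
      then have "\<bar>u\<bar> * \<bar>z' \<bullet> (B *v muh)\<bar> \<le> \<bar>u\<bar> * (sqrt V * \<rho>)" unfolding nz' by (rule mult_left_mono) simp
      moreover have "u * (z' \<bullet> (B *v muh)) \<le> \<bar>u\<bar> * \<bar>z' \<bullet> (B *v muh)\<bar>" by (simp add: abs_mult[symmetric])
      ultimately show ?thesis by (simp add: mult.assoc)
    qed
    have od: "(1 + u^2) * \<rho>^2 - 2 * (\<bar>u\<bar> * sqrt V) * \<rho> - 2 * ln \<rho> \<ge> (1 + u^2) * r^2 - 2 * (\<bar>u\<bar> * sqrt V) * r - 2 * ln r"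
      by (rule oned) (use cf(2,3) rp in \<open>auto simp: add_pos_nonneg\<close>)
    have "2 * KL_affine mu S A b + real CARD('n) = fro B + (z' - u *\<^sub>R (B *v muh)) \<bullet> (z' - u *\<^sub>R (B *v muh)) - 2 * ln \<bar>det B\<bar>"
      unfolding KLf[OF dA wb] B_def by (simp add: field_simps)
    then show ?thesis using LB yy cs od unfolding M_def by (simp add: algebra_simps)
  qed
  have main: "invertible Astar \<and> w' = Astar *v w + bstar
        \<and> (\<forall>A b. invertible A \<and> w' = A *v w + b \<longrightarrow>
              KL_affine mu S Astar bstar \<le> KL_affine mu S A b)
        \<and> Astar *v mu + bstar = Astar *v (mu - w) + w'"
  proof (intro conjI allI impI)
    show "invertible Astar" using dAs invertible_det_nz by blast
    show "w' = Astar *v w + bstar" unfolding bstar_def by simp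
    show "Astar *v mu + bstar = Astar *v (mu - w) + w'"
      unfolding bstar_def by (simp add: matrix_vector_mult_diff_distrib)
    fix A b assume "invertible A \<and> w' = A *v w + b"
    then have "2 * KL_affine mu S A b + real CARD('n) \<ge> M" using lower by blast
    then show "KL_affine mu S Astar bstar \<le> KL_affine mu S A b" using KLstar by simp
  qed
  have d1m: "d1 \<in> {-1, 1}" unfolding d1_def by simp
  show ?thesis
    apply (rule exI[of _ d1], rule exI[of _ 1])
    using d1m main unfolding Let_def Astar_def bstar_def A2_def W_def c_def V_def
    by simp
qed


end
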